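(* Let $X,Y$ be real Banach spaces with a bilinear map $\langle\cdot,\cdot\rangle\colon X\times Y\to\mathbb{R}$ and normalized sequences $(e_j)\subset X$, $(f_j)\subset Y$ satisfying (B1)–(B5) below. Let $T\colon X\to X$ be a bounded linear operator with $\delta:=\inf_j\langle Te_j,f_j\rangle>0$. Let $L\in2\mathbb{N}$, $N\in\mathbb{N}$ with $N\ge L$, and let $\mathcal{A}\subset\mathbb{N}$ with $|\mathcal{A}|=N$. Then $$\frac{1}{|\Omega_L^{\mathcal{A}}|}\sum_{(\mathcal{B},(\varepsilon_k))\in\Omega_L^{\mathcal{A}}}\bigl\langle Tb_{\mathcal{B}}^{(\varepsilon_k)},d_{\mathcal{B}}^{(\varepsilon_k)}\bigr\rangle\ \ge\ \Bigl[\delta-C_d\frac{\|T\|}{N-1}\nu(N)\Bigr]\cdot L.$$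
   Context: Standing assumptions: (B1) if $\langle x,y\rangle=0$ for all $y\in Y$ then $x=0$; (B2) if $\langle x,y\rangle=0$ for all $x\in X$ then $y=0$; (B3) there is $C_d>0$ with $|\langle x,y\rangle|\le C_d\|x\|\|y\|$; (B4) $\langle e_j,f_k\rangle=1$ if $j=k$ and $0$ otherwise; (B5) every $x\in X$ has the unique representation $x=\sum_j\langle x,f_j\rangle e_j$ converging in $\sigma(X,Y)$, the topology generated by the seminorms $x\mapsto|\langle x,y\rangle|$, $y\in Y$. For finite $\mathcal{B}$, $\mathcal{E}(\mathcal{B})=\{(\varepsilon_k)\in\{\pm1\}^{\mathcal{B}}:\sum_{k\in\mathcal{B}}\varepsilon_k=0\}$. For $\mathcal{A}$ finite with $|\mathcal{A}|\ge L$, $\Omega_L^{\mathcal{A}}=\{(\mathcal{B},(\varepsilon_k)):\mathcal{B}\subset\mathcal{A},\ |\mathcal{B}|=L,\ (\varepsilon_k)\in\mathcal{E}(\mathcal{B})\}$, and $b_{\mathcal{B}}^{(\varepsilon_k)}=\sum_{k\in\mathcal{B}}\varepsilon_ke_k$, $d_{\mathcal{B}}^{(\varepsilon_k)}=\sum_{k\in\mathcal{B}}\varepsilon_kf_k$. The function $\nu\colon\mathbb{N}\to[0,\infty]$ is $$\nu(n)=\sup\Bigl\{\min\Bigl(\max_{l\in\mathcal{A}}\Bigl\|\sum_{k\in\mathcal{A}\setminus\{l\}}e_k\Bigr\|_X,\ \max_{k\in\mathcal{A}}\Bigl\|\sum_{l\in\mathcal{A}\setminus\{k\}}f_l\Bigr\|_Y\Bigr):\mathcal{A}\subset\mathbb{N},\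 |\mathcal{A}|=n\Bigr\}.$$ *)

theory Defs
  imports "HOL-Analysis.Analysis"
begin

definition signs_E :: "nat set \<Rightarrow> (nat \<Rightarrow> real) set" where
  "signs_E B = {\<epsilon>. (\<forall>k\<in>B. \<epsilon> k = 1 \<or> \<epsilon> k = -1) \<and> (\<forall>k. k \<notin> B \<longrightarrow> \<epsilon> k = 0)
                   \<and> (\<Sum>k\<in>B. \<epsilon> k) = 0}"

definition Omega :: "nat \<Rightarrow> nat set \<Rightarrow> (nat set \<times> (nat \<Rightarrow> real)) set" where
  "Omega L A = {(B, \<epsilon>). B \<subseteq> A \<and> card B = L \<and> \<epsilon> \<in> signs_E B}"

definition bvec :: "(nat \<Rightarrow> 'a::real_vector) \<Rightarrow> nat set \<Rightarrow> (nat \<Rightarrow> real) \<Rightarrow> 'a" where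
  "bvec e B \<epsilon> = (\<Sum>k\<in>B. \<epsilon> k *\<^sub>R e k)"

definition nu :: "(nat \<Rightarrow> 'x::real_normed_vector) \<Rightarrow> (nat \<Rightarrow> 'y::real_normed_vector) \<Rightarrow> nat \<Rightarrow> ereal" where
  "nu e f n = (SUP A \<in> {A. finite A \<and> card A = n}.
      ereal (min (Max ((\<lambda>l. norm (\<Sum>k\<in>A - {l}. e k)) ` A))
                 (Max ((\<lambda>k. norm (\<Sum>l\<in>A - {k}. f l)) ` A))))"

end

theory Submission
  imports Defs
begin


definition swp :: "nat \<Rightarrow> nat \<Rightarrow> nat \<Rightarrow> nat" where
  "swp a b x = (if x = a then b else if x = b then a else x)"

lemma swp_swp[simp]: "swp a b (swp a b x) = x"
  by (auto simp: swp_def)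

lemma swp_inj: "inj (swp a b)"
  by (metis injI swp_swp)

lemma swp_img_img[simp]: "swp a b ` swp a b ` B = B"
  by (force simp: image_iff)

lemma Omega_swap_mem:
  assumes "a \<in> A" "b \<in> A" "(B, \<epsilon>) \<in> Omega L A"
  shows "(swp a b ` B, \<epsilon> \<circ> swp a b) \<in> Omega L A"
proof -
  let ?s = "swp a b"
  from assms(3) have B: "B \<subseteq> A" "card B = L" "\<epsilon> \<in> signs_E B" by (auto simp: Omega_def)
  have "?s ` B \<subseteq> A" using B(1) assms(1,2) by (auto simp: swp_def)
  moreover have "card (?s ` B) = L" using B(2) card_image[OF inj_on_subset[OF swp_inj]] by auto
  moreover have "\<epsilon> \<circ> ?s \<in> signs_E (?s ` B)"
  proof -
    have 1: "\<forall>k\<in>?s ` B. (\<epsilon> \<circ> ?s) k = 1 \<or> (\<epsilon> \<circ> ?s) k = -1" using B(3) by (auto simp: signs_E_def)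
    have 2: "\<forall>k. k \<notin> ?s ` B \<longrightarrow> (\<epsilon> \<circ> ?s) k = 0"
    proof (intro allI impI)
      fix k assume "k \<notin> ?s ` B"
      then have "?s k \<notin> B" by (metis image_eqI swp_swp)
      then show "(\<epsilon> \<circ> ?s) k = 0" using B(3) by (auto simp: signs_E_def)
    qed
    have "(\<Sum>k\<in>?s ` B. (\<epsilon> \<circ> ?s) k) = (\<Sum>k\<in>B. (\<epsilon> \<circ> ?s) (?s k))"
      using sum.reindex[OF inj_on_subset[OF swp_inj, of B a b], of "\<epsilon> \<circ> swp a b"] by (simp add: comp_def)
    also have "\<dots> = (\<Sum>k\<in>B. \<epsilon> k)" by simp
    also have "\<dots> = 0" using B(3) by (auto simp: signs_E_def)
    finally show ?thesis using 1 2 by (simp add: signs_E_def)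
  qed
  ultimately show ?thesis by (simp add: Omega_def)
qed

lemma Omega_swap:
  assumes "a \<in> A" "b \<in> A"
  shows "(\<Sum>x\<in>Omega L A. g x) = (\<Sum>(B, \<epsilon>)\<in>Omega L A. g (swp a b ` B, \<epsilon> \<circ> swp a b))"
proof (rule sum.reindex_bij_witness[where i="\<lambda>(B, \<epsilon>). (swp a b ` B, \<epsilon> \<circ> swp a b)"
      and j="\<lambda>(B, \<epsilon>). (swp a b ` B, \<epsilon> \<circ> swp a b)"])
qed (auto simp: comp_def dest: Omega_swap_mem[OF assms])

definition W :: "nat \<Rightarrow> nat set \<Rightarrow> nat \<Rightarrow> nat \<Rightarrow> real" where
  "W L A j k = (\<Sum>(B, \<epsilon>)\<in>Omega L A. \<epsilon> j * \<epsilon> k)"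

lemma W_sym: "W L A j k = W L A k j"
  by (simp add: W_def mult.commute)

lemma W_swap:
  assumes "k \<in> A" "k' \<in> A" "j \<noteq> k" "j \<noteq> k'"
  shows "W L A j k = W L A j k'"
proof -
  have "W L A j k' = (\<Sum>(B, \<epsilon>)\<in>Omega L A. (\<epsilon> \<circ> swp k k') j * (\<epsilon> \<circ> swp k k') k')"
    unfolding W_def by (subst Omega_swap[OF assms(1,2)]) (simp add: case_prod_unfold)
  also have "\<dots> = W L A j k" using assms(3,4) by (simp add: W_def swp_def)
  finally show ?thesis by simp
qed

lemma W_const:
  assumes "j \<in> A" "k \<in> A" "j' \<in> A" "k' \<in> A" "j \<noteq> k" "j' \<noteq> k'"
  shows "W L A j k = W L A j' k'"
proof (cases "j = k'")
  case False
  have "W L A j k = W L A j k'" using W_swap assms False by metis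
  also have "\<dots> = W L A k' j" by (rule W_sym)
  also have "\<dots> = W L A k' j'" using W_swap assms False by metis
  also have "\<dots> = W L A j' k'" by (rule W_sym)
  finally show ?thesis .
next
  case True
  show ?thesis
  proof (cases "j' = k")
    case True
    then show ?thesis using \<open>j = k'\<close> W_sym by metis
  next
    case False
    have "W L A j k = W L A j j'" using W_swap assms False True by metis
    also have "\<dots> = W L A j' j" by (rule W_sym)
    finally show ?thesis using True by simp
  qed
qed

lemma Omega_memD:
  assumes "(B, \<epsilon>) \<in> Omega L A"
  shows "B \<subseteq> A" "card B = L" "\<And>k. k \<in> B \<Longrightarrow> \<epsilon> k = 1 \<or> \<epsilon> k = -1"
    "\<And>k. k \<notin> B \<Longrightarrow> \<epsilon> k = 0" "(\<Sum>k\<in>B. \<epsilon> k) = 0"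
  using assms by (auto simp: Omega_def signs_E_def)

lemma Omega_finite:
  assumes "finite A"
  shows "finite (Omega L A)"
proof -
  let ?F = "(\<lambda>g k. if k \<in> A then g k else 0) ` (PiE A (\<lambda>_. {-1, 0, 1::real}))"
  have "finite ?F" using assms by (intro finite_imageI finite_PiE) auto
  moreover have "Omega L A \<subseteq> Pow A \<times> ?F"
  proof
    fix x assume x: "x \<in> Omega L A"
    obtain B \<epsilon> where xe: "x = (B, \<epsilon>)" by (cases x)
    note D = Omega_memD[OF x[unfolded xe]]
    have "\<epsilon> \<in> ?F"
    proof (rule image_eqI[where x="restrict \<epsilon> A"])
      show "\<epsilon> = (\<lambda>g k. if k \<in> A then g k else 0) (restrict \<epsilon> A)"
        using D(1,4) by (auto simp: fun_eq_iff)
      have "\<epsilon> i \<in> {-1, 0, 1::real}" for i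
      proof (cases "i \<in> B")
        case True then show ?thesis using D(3)[of i] by auto
      qed (use D(4) in auto)
      then show "restrict \<epsilon> A \<in> PiE A (\<lambda>_. {-1, 0, 1::real})" by (auto simp: PiE_iff)
    qed
    then show "x \<in> Pow A \<times> ?F" using D(1) xe by auto
  qed
  moreover have "finite (Pow A \<times> ?F)" using assms \<open>finite ?F\<close> by (intro finite_cartesian_product) auto
  ultimately show ?thesis using finite_subset by blast
qed

lemma Omega_nonempty:
  assumes "finite A" "even L" "L \<le> card A"
  shows "Omega L A \<noteq> {}"
proof -
  obtain B where B: "B \<subseteq> A" "card B = L" "finite B" using obtain_subset_with_card_n[OF assms(3)] by metis
  obtain C where C: "C \<subseteq> B" "card C = L div 2" "finite C"
    using obtain_subset_with_card_n[of "L div 2" B] B(2) by auto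
  define \<epsilon> where "\<epsilon> = (\<lambda>k. if k \<in> C then 1 else if k \<in> B then -1 else (0::real))"
  have "(\<Sum>k\<in>B. \<epsilon> k) = (\<Sum>k\<in>C. \<epsilon> k) + (\<Sum>k\<in>B - C. \<epsilon> k)"
    using B(3) C(1) by (metis sum.subset_diff add.commute)
  also have "\<dots> = real (card C) - real (card (B - C))"
    by (simp add: \<epsilon>_def)
  also have "\<dots> = 0"
  proof -
    obtain m where m: "L = 2 * m" using assms(2) by blast
    have "card (B - C) = L - L div 2" using C B by (simp add: card_Diff_subset)
    then show ?thesis using C(2) m by simp
  qed
  finally have s0: "(\<Sum>k\<in>B. \<epsilon> k) = 0" .
  have s1: "\<forall>k\<in>B. \<epsilon> k = 1 \<or> \<epsilon> k = -1" by (simp add: \<epsilon>_def)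
  have s2: "\<forall>k. k \<notin> B \<longrightarrow> \<epsilon> k = 0" using C(1) by (auto simp add: \<epsilon>_def)
  have "\<epsilon> \<in> signs_E B" unfolding signs_E_def using s0 s1 s2 by blast
  then have "(B, \<epsilon>) \<in> Omega L A" using B by (simp add: Omega_def)
  then show ?thesis by auto
qed

lemma eps_sumA:
  assumes "finite A" "(B, \<epsilon>) \<in> Omega L A"
  shows "(\<Sum>k\<in>A. \<epsilon> k) = 0"
proof -
  note D = Omega_memD[OF assms(2)]
  have "(\<Sum>k\<in>A. \<epsilon> k) = (\<Sum>k\<in>B. \<epsilon> k)"
    using D(1,4) assms(1) by (intro sum.mono_neutral_right) auto
  then show ?thesis using D(5) by simp
qed

lemma eps_sq:
  assumes "(B, \<epsilon>) \<in> Omega L A"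
  shows "\<epsilon> j * \<epsilon> j = (if j \<in> B then 1 else 0)"
proof (cases "j \<in> B")
  case True
  then have "\<epsilon> j = 1 \<or> \<epsilon> j = -1" using Omega_memD(3)[OF assms] by blast
  then show ?thesis using True by auto
qed (use Omega_memD(4)[OF assms] in auto)

lemma W_row:
  assumes "finite A"
  shows "(\<Sum>k\<in>A. W L A j k) = 0"
proof -
  have "(\<Sum>k\<in>A. W L A j k) = (\<Sum>(B, \<epsilon>)\<in>Omega L A. \<epsilon> j * (\<Sum>k\<in>A. \<epsilon> k))"
    unfolding W_def by (subst sum.swap) (simp add: case_prod_unfold sum_distrib_left)
  also have "\<dots> = 0" using eps_sumA[OF assms] by (intro sum.neutral) auto
  finally show ?thesis .
qed

lemma W_diag:
  assumes "finite A"
  shows "(\<Sum>j\<in>A. W L A j j) = real L * real (card (Omega L A))"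
proof -
  have "(\<Sum>j\<in>A. W L A j j) = (\<Sum>(B, \<epsilon>)\<in>Omega L A. (\<Sum>j\<in>A. \<epsilon> j * \<epsilon> j))"
    unfolding W_def by (subst sum.swap) (simp add: case_prod_unfold)
  also have "\<dots> = (\<Sum>(B, \<epsilon>)\<in>Omega L A. real L)"
  proof (intro sum.cong refl, clarify)
    fix B \<epsilon> assume x: "(B, \<epsilon>) \<in> Omega L A"
    note D = Omega_memD[OF x]
    have "(\<Sum>j\<in>A. \<epsilon> j * \<epsilon> j) = (\<Sum>j\<in>A. if j \<in> B then 1 else 0)"
      using eps_sq[OF x] by simp
    also have "\<dots> = real (card (A \<inter> B))" by (simp add: sum.If_cases assms)
    also have "A \<inter> B = B" using D(1) by auto
    finally show "(\<Sum>j\<in>A. \<epsilon> j * \<epsilon> j) = real L" using D(2) by simp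
  qed
  also have "\<dots> = real L * real (card (Omega L A))" by simp
  finally show ?thesis .
qed

lemma expand:
  fixes pair :: "'x::real_normed_vector \<Rightarrow> 'y::real_normed_vector \<Rightarrow> real"
  assumes bil: "bilinear pair" and T: "linear T" and fA: "finite A"
    and x: "(B, \<epsilon>) \<in> Omega L A"
  shows "pair (T (bvec e B \<epsilon>)) (bvec f B \<epsilon>) =
     (\<Sum>j\<in>A. \<Sum>k\<in>A. \<epsilon> j * \<epsilon> k * pair (T (e j)) (f k))"
proof -
  note D = Omega_memD[OF x]
  have be: "bvec e B \<epsilon> = (\<Sum>j\<in>A. \<epsilon> j *\<^sub>R e j)"
    unfolding bvec_def using D(1,4) fA by (intro sum.mono_neutral_left) auto
  have bf: "bvec f B \<epsilon> = (\<Sum>j\<in>A. \<epsilon> j *\<^sub>R f j)"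
    unfolding bvec_def using D(1,4) fA by (intro sum.mono_neutral_left) auto
  have "T (bvec e B \<epsilon>) = (\<Sum>j\<in>A. \<epsilon> j *\<^sub>R T (e j))"
    unfolding be by (simp add: linear_sum[OF T] linear_scale[OF T])
  then have "pair (T (bvec e B \<epsilon>)) (bvec f B \<epsilon>) =
     (\<Sum>(j,k)\<in>A \<times> A. pair (\<epsilon> j *\<^sub>R T (e j)) (\<epsilon> k *\<^sub>R f k))"
    unfolding bf by (simp add: bilinear_sum[OF bil])
  also have "\<dots> = (\<Sum>j\<in>A. \<Sum>k\<in>A. \<epsilon> j * \<epsilon> k * pair (T (e j)) (f k))"
    by (simp add: sum.cartesian_product bilinear_lmul[OF bil] bilinear_rmul[OF bil] mult_ac)
  finally show ?thesis .
qed

theorem lemma3p2: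
  fixes pair :: "'x::banach \<Rightarrow> 'y::banach \<Rightarrow> real"
    and e :: "nat \<Rightarrow> 'x" and f :: "nat \<Rightarrow> 'y"
    and Cd :: real and T :: "'x \<Rightarrow> 'x"
    and L N :: nat and A :: "nat set"
  assumes bil: "bilinear pair"
    and B1: "\<And>x. (\<forall>y. pair x y = 0) \<Longrightarrow> x = 0"
    and B2: "\<And>y. (\<forall>x. pair x y = 0) \<Longrightarrow> y = 0"
    and Cd_pos: "Cd > 0"
    and B3: "\<And>x y. \<bar>pair x y\<bar> \<le> Cd * norm x * norm y"
    and B4: "\<And>j k. pair (e j) (f k) = (if j = k then 1 else 0)"
    and B5_conv: "\<And>x y. (\<lambda>n. \<Sum>j<n. pair x (f j) * pair (e j) y) \<longlonglongrightarrow> pair x y"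
    and B5_uniq: "\<And>x a. (\<forall>y. (\<lambda>n. \<Sum>j<n. a j * pair (e j) y) \<longlonglongrightarrow> pair x y)
                    \<Longrightarrow> a = (\<lambda>j. pair x (f j))"
    and e_norm: "\<And>j. norm (e j) = 1"
    and f_norm: "\<And>j. norm (f j) = 1"
    and T_lin: "bounded_linear T"
    and delta_pos: "(INF j. pair (T (e j)) (f j)) > 0"
    and L_even: "even L" and L_pos: "L > 0"
    and NL: "N \<ge> L"
    and A_fin: "finite A" and A_card: "card A = N"
  shows "ereal ((1 / real (card (Omega L A))) *
           (\<Sum>(B, \<epsilon>)\<in>Omega L A. pair (T (bvec e B \<epsilon>)) (bvec f B \<epsilon>)))
         \<ge> (ereal (INF j. pair (T (e j)) (f j))
             - ereal (Cd * onorm T / (real N - 1)) * nu e f N) * ereal (real L)"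
proof -
  define a where "a j k = pair (T (e j)) (f k)" for j k
  define \<delta> where "\<delta> = (INF j. pair (T (e j)) (f j))"
  define Om where "Om = Omega L A"
  define M where "M = card Om"
  define c where "c = Cd * onorm T / (real N - 1)"
  define Me where "Me = Max ((\<lambda>l. norm (\<Sum>k\<in>A - {l}. e k)) ` A)"
  define Mf where "Mf = Max ((\<lambda>k. norm (\<Sum>l\<in>A - {k}. f l)) ` A)"
  define m where "m = min Me Mf"
  have Tl: "linear T" using T_lin bounded_linear.linear by blast
  have pl: "linear (pair x)" for x using bil unfolding bilinear_def by blast
  have pr: "linear (\<lambda>x. pair x y)" for y using bil unfolding bilinear_def by blast
  have onT: "0 \<le> onorm T" using onorm_pos_le[OF T_lin] .
  have Te: "norm (T (e j)) \<le> onorm T" for j using onorm[OF T_lin, of "e j"] e_norm by simp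
  have pb: "pair x y \<le> Cd * norm x * norm y" for x y using B3[of x y] by linarith
  have L2: "L \<ge> 2" using L_even L_pos by presburger
  have N2: "N \<ge> 2" using L2 NL by linarith
  have Nr: "real N \<ge> 2" using N2 by simp
  have fOm: "finite Om" unfolding Om_def using Omega_finite[OF A_fin] .
  have Mpos: "M > 0" unfolding M_def Om_def using Omega_nonempty[OF A_fin L_even] NL A_card Omega_finite[OF A_fin]
    by (simp add: card_gt_0_iff)
  have bdd: "bdd_below (range (\<lambda>j. pair (T (e j)) (f j)))"
  proof (rule bdd_belowI[where m="- (Cd * onorm T)"], clarify)
    fix j
    have "\<bar>pair (T (e j)) (f j)\<bar> \<le> Cd * norm (T (e j)) * norm (f j)" by (rule B3)
    also have "\<dots> \<le> Cd * onorm T" using Te[of j] f_norm Cd_pos by simp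
    finally show "- (Cd * onorm T) \<le> pair (T (e j)) (f j)" by linarith
  qed
  have del: "\<delta> \<le> a j j" for j unfolding \<delta>_def a_def by (rule cINF_lower[OF bdd]) simp
  have S1: "(\<Sum>(B, \<epsilon>)\<in>Om. pair (T (bvec e B \<epsilon>)) (bvec f B \<epsilon>))
      = (\<Sum>(B, \<epsilon>)\<in>Om. \<Sum>j\<in>A. \<Sum>k\<in>A. \<epsilon> j * \<epsilon> k * a j k)"
    unfolding Om_def a_def by (intro sum.cong refl) (auto intro: expand[OF bil Tl A_fin])
  also have "\<dots> = (\<Sum>j\<in>A. \<Sum>k\<in>A. \<Sum>(B, \<epsilon>)\<in>Om. \<epsilon> j * \<epsilon> k * a j k)"
    by (simp add: case_prod_unfold sum.swap[of _ Om] )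
  also have "\<dots> = (\<Sum>j\<in>A. \<Sum>k\<in>A. a j k * W L A j k)"
    unfolding W_def Om_def by (simp add: sum_distrib_left case_prod_unfold mult_ac)
  finally have S1: "(\<Sum>(B, \<epsilon>)\<in>Om. pair (T (bvec e B \<epsilon>)) (bvec f B \<epsilon>))
      = (\<Sum>j\<in>A. \<Sum>k\<in>A. a j k * W L A j k)" .
  obtain j0 k0 where jk0: "j0 \<in> A" "k0 \<in> A" "j0 \<noteq> k0"
  proof -
    have "1 < card A" using N2 A_card by simp
    then show ?thesis using that A_fin by (metis card_le_Suc0_iff_eq not_le One_nat_def)
  qed
  define w where "w = W L A j0 k0"
  have Woff: "W L A j k = w" if "j \<in> A" "k \<in> A" "j \<noteq> k" for j k
    unfolding w_def using W_const[OF that(1,2) jk0(1,2) that(3) jk0(3)] .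
  have rem: "(\<Sum>k\<in>A. g k) = g j + (\<Sum>k\<in>A - {j}. g k)" if "j \<in> A" for g :: "nat \<Rightarrow> real" and j
    using sum.remove[OF A_fin that] .
  have cardrem: "card (A - {j}) = N - 1" if "j \<in> A" for j using that A_card A_fin by simp
  have Wd: "W L A j j = - (real N - 1) * w" if "j \<in> A" for j
  proof -
    have "0 = W L A j j + (\<Sum>k\<in>A - {j}. W L A j k)" using W_row[OF A_fin, of L j] rem[OF that] by simp
    also have "(\<Sum>k\<in>A - {j}. W L A j k) = (\<Sum>k\<in>A - {j}. w)" using Woff that by (intro sum.cong) auto
    also have "\<dots> = (real N - 1) * w" using cardrem[OF that] N2 by (simp add: of_nat_diff)
    finally show ?thesis by (simp add: algebra_simps)
  qed
  have "real L * real M = (\<Sum>j\<in>A. W L A j j)" using W_diag[OF A_fin, of L] unfolding M_def Om_def by simp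
  also have "\<dots> = (\<Sum>j\<in>A. - (real N - 1) * w)" using Wd by (intro sum.cong) auto
  also have "\<dots> = - real N * (real N - 1) * w" using A_card by (simp add: algebra_simps)
  finally have wval: "w = - real L * real M / (real N * (real N - 1))" using Nr
    by (simp add: field_simps)
  have Wdv: "W L A j j = real L * real M / real N" if "j \<in> A" for j
  proof -
    have "real N - 1 \<noteq> 0" "real N \<noteq> 0" using Nr by auto
    then show ?thesis unfolding Wd[OF that] wval by (simp add: field_simps)
  qed
  define D where "D = (\<Sum>j\<in>A. a j j)"
  define Off where "Off = (\<Sum>j\<in>A. \<Sum>k\<in>A - {j}. a j k)"
  have S2: "(\<Sum>j\<in>A. \<Sum>k\<in>A. a j k * W L A j k) = real L * real M / real N * D + w * Off"
  proof -
    have "(\<Sum>j\<in>A. \<Sum>k\<in>A. a j k * W L A j k) = (\<Sum>j\<in>A. a j j * (real L * real M / real N) + w * (\<Sum>k\<in>A - {j}. a j k))"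
    proof (intro sum.cong refl)
      fix j assume j: "j \<in> A"
      have "(\<Sum>k\<in>A. a j k * W L A j k) = a j j * W L A j j + (\<Sum>k\<in>A - {j}. a j k * W L A j k)"
        using rem[OF j] .
      also have "(\<Sum>k\<in>A - {j}. a j k * W L A j k) = (\<Sum>k\<in>A - {j}. a j k * w)"
        using Woff j by (intro sum.cong) auto
      finally show "(\<Sum>k\<in>A. a j k * W L A j k) = a j j * (real L * real M / real N) + w * (\<Sum>k\<in>A - {j}. a j k)"
        using Wdv[OF j] by (simp add: sum_distrib_left mult_ac)
    qed
    also have "\<dots> = real L * real M / real N * D + w * Off"
      unfolding D_def Off_def by (simp add: sum.distrib sum_distrib_left sum_divide_distrib mult_ac)
    finally show ?thesis .
  qed
  have Dlow: "D \<ge> real N * \<delta>"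
  proof -
    have "(\<Sum>j\<in>A. \<delta>) \<le> D" unfolding D_def by (intro sum_mono del)
    then show ?thesis using A_card by simp
  qed
  have Of: "Off \<le> real N * (Cd * onorm T * Mf)"
  proof -
    have "Off = (\<Sum>j\<in>A. pair (T (e j)) (\<Sum>k\<in>A - {j}. f k))"
      unfolding Off_def a_def by (simp add: linear_sum[OF pl])
    also have "\<dots> \<le> (\<Sum>j\<in>A. Cd * onorm T * Mf)"
    proof (intro sum_mono)
      fix j assume j: "j \<in> A"
      have "norm (\<Sum>k\<in>A - {j}. f k) \<le> Mf" unfolding Mf_def using A_fin j by (intro Max_ge) auto
      then have "Cd * norm (T (e j)) * norm (\<Sum>k\<in>A - {j}. f k) \<le> Cd * onorm T * Mf"
        using Te[of j] Cd_pos onT by (intro mult_mono) auto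
      then show "pair (T (e j)) (\<Sum>k\<in>A - {j}. f k) \<le> Cd * onorm T * Mf" using pb order_trans by blast
    qed
    finally show ?thesis using A_card by simp
  qed
  have swapoff: "(\<Sum>j\<in>A. \<Sum>k\<in>A - {j}. g j k) = (\<Sum>k\<in>A. \<Sum>j\<in>A - {k}. g j k)" for g :: "nat \<Rightarrow> nat \<Rightarrow> real"
  proof -
    have "(\<Sum>j\<in>A. \<Sum>k\<in>A - {j}. g j k) = (\<Sum>j\<in>A. \<Sum>k\<in>A. if k = j then 0 else g j k)"
    proof (rule sum.cong[OF refl])
      fix j assume j: "j \<in> A"
      have "(\<Sum>k\<in>A. if k = j then 0 else g j k) = (\<Sum>k\<in>A - {j}. if k = j then 0 else g j k)"
        using rem[OF j, of "\<lambda>k. if k = j then 0 else g j k"] by simp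
      also have "\<dots> = (\<Sum>k\<in>A - {j}. g j k)" by (intro sum.cong) auto
      finally show "(\<Sum>k\<in>A - {j}. g j k) = (\<Sum>k\<in>A. if k = j then 0 else g j k)" by simp
    qed
    also have "\<dots> = (\<Sum>k\<in>A. \<Sum>j\<in>A. if k = j then 0 else g j k)" by (rule sum.swap)
    also have "\<dots> = (\<Sum>k\<in>A. \<Sum>j\<in>A - {k}. g j k)"
    proof (rule sum.cong[OF refl])
      fix k assume k: "k \<in> A"
      have "(\<Sum>j\<in>A. if k = j then 0 else g j k) = (\<Sum>j\<in>A - {k}. if k = j then 0 else g j k)"
        using rem[OF k, of "\<lambda>j. if k = j then 0 else g j k"] by simp
      also have "\<dots> = (\<Sum>j\<in>A - {k}. g j k)" by (intro sum.cong) auto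
      finally show "(\<Sum>j\<in>A. if k = j then 0 else g j k) = (\<Sum>j\<in>A - {k}. g j k)" .
    qed
    finally show ?thesis .
  qed
  have Oe: "Off \<le> real N * (Cd * onorm T * Me)"
  proof -
    have "Off = (\<Sum>k\<in>A. \<Sum>j\<in>A - {k}. a j k)" unfolding Off_def by (rule swapoff)
    also have "\<dots> = (\<Sum>k\<in>A. pair (T (\<Sum>j\<in>A - {k}. e j)) (f k))"
      unfolding a_def by (simp add: linear_sum[OF pr] linear_sum[OF Tl])
    also have "\<dots> \<le> (\<Sum>k\<in>A. Cd * onorm T * Me)"
    proof (intro sum_mono)
      fix k assume k: "k \<in> A"
      have "norm (\<Sum>j\<in>A - {k}. e j) \<le> Me" unfolding Me_def using A_fin k by (intro Max_ge) auto
      then have "onorm T * norm (\<Sum>j\<in>A - {k}. e j) \<le> onorm T * Me" using onT by (intro mult_left_mono)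
      then have "norm (T (\<Sum>j\<in>A - {k}. e j)) \<le> onorm T * Me" using onorm[OF T_lin, of "\<Sum>j\<in>A - {k}. e j"] by linarith
      then have "Cd * norm (T (\<Sum>j\<in>A - {k}. e j)) * norm (f k) \<le> Cd * onorm T * Me"
        using f_norm Cd_pos by (simp add: mult.assoc)
      then show "pair (T (\<Sum>j\<in>A - {k}. e j)) (f k) \<le> Cd * onorm T * Me" using pb order_trans by blast
    qed
    finally show ?thesis using A_card by simp
  qed
  have Om: "Off \<le> real N * (Cd * onorm T * m)"
    unfolding m_def using Oe Of by (cases "Me \<le> Mf") (auto simp: min_def)
  have avg: "(1 / real M) * (real L * real M / real N * D + w * Off)
      = real L / real N * D - real L / (real N * (real N - 1)) * Off"
    using Mpos Nr unfolding wval by (simp add: field_simps)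
  have "real L / real N * (real N * \<delta>) \<le> real L / real N * D"
    using Dlow by (intro mult_left_mono) auto
  moreover have "real L / (real N * (real N - 1)) * Off \<le> real L / (real N * (real N - 1)) * (real N * (Cd * onorm T * m))"
    using Om Nr by (intro mult_left_mono) auto
  ultimately have "real L / real N * D - real L / (real N * (real N - 1)) * Off
      \<ge> real L / real N * (real N * \<delta>) - real L / (real N * (real N - 1)) * (real N * (Cd * onorm T * m))"
    by linarith
  also have "real L / real N * (real N * \<delta>) - real L / (real N * (real N - 1)) * (real N * (Cd * onorm T * m))
      = (\<delta> - c * m) * real L"
    unfolding c_def using Nr by (simp add: field_simps)
  finally have real_ineq: "(1 / real (card (Omega L A))) *
           (\<Sum>(B, \<epsilon>)\<in>Omega L A. pair (T (bvec e B \<epsilon>)) (bvec f B \<epsilon>)) \<ge> (\<delta> - c * m) * real L"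
    using S1 S2 avg unfolding M_def Om_def by simp
  have nuge: "ereal m \<le> nu e f N"
    unfolding nu_def m_def Me_def Mf_def using A_fin A_card by (intro SUP_upper) auto
  have c0: "0 \<le> c" unfolding c_def using Cd_pos onT Nr by simp
  have "ereal c * ereal m \<le> ereal c * nu e f N"
    using nuge c0 by (intro ereal_mult_left_mono) auto
  then have "ereal \<delta> - ereal c * nu e f N \<le> ereal \<delta> - ereal c * ereal m"
    by (intro ereal_minus_mono) auto
  then have "(ereal \<delta> - ereal c * nu e f N) * ereal (real L) \<le> (ereal \<delta> - ereal c * ereal m) * ereal (real L)"
    by (intro ereal_mult_right_mono) auto
  also have "\<dots> = ereal ((\<delta> - c * m) * real L)" by simp
  also have "\<dots> \<le> ereal ((1 / real (card (Omega L A))) *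
           (\<Sum>(B, \<epsilon>)\<in>Omega L A. pair (T (bvec e B \<epsilon>)) (bvec f B \<epsilon>)))"
    using real_ineq by simp
  finally show ?thesis unfolding \<delta>_def c_def .
qed

end
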